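(* Let $q\ge 2$ be a prime power and $\xi\in\mathbb{F}_q\setminus\{0\}$. The set $$B=\bigcup_{c\in\mathbb{F}_q}N_{\Gamma_q}[(q,0,c)_1]\ \cup\ N_{\Gamma_q}[(q,q,0)_1]\ \cup\ \Big(\bigcap_{c\in\mathbb{F}_q}N^2_{\Gamma_q}[(q,0,c)_1]\cap N^2_{\Gamma_q}[(q,q,0)_1]\Big)\ \cup\ N^2_{\Gamma_q}[(q,q,\xi)_1]$$ is a perfect dominating set of $\Gamma_q$, and $|B|=2(q^2+3q+1)$.
   Context: Let $q\ge 2$ be a prime power and $\mathbb{F}_q$ the field with $q$ elements; in the vertex labels below the symbol $q$ is also used as an extra formal symbol not belonging to $\mathbb{F}_q$, and all arithmetic is in $\mathbb{F}_q$. $\Gamma_q$ is the bipartite graph with parts $V_0,V_1$, where for $r\in\{0,1\}$ the set $V_r$ consists of the vertices $(a,b,c)_r$ with $a\in\mathbb{F}_q\cup\{q\}$, $b,c\in\mathbb{F}_q$, together with the vertices $(q,q,a)_r$ with $a\in\mathbb{F}_q\cup\{q\}$. The edges are given by: for $a,b,c\in\mathbb{F}_q$, $N((a,b,c)_1)=\{(x,\,ax+b,\,a^2x+2ab+c)_0: x\in\mathbb{F}_q\}\cup\{(q,a,c)_0\}$; for $b,c\in\mathbb{F}_q$, $N((q,b,c)_1)=\{(c,b,x)_0: x\in\mathbb{F}_q\}\cup\{(q,q,c)_0\}$; for $a\in\mathbb{F}_q\cup\{q\}$, $N((q,q,a)_1)=\{(q,a,x)_0: x\in\mathbb{F}_q\}\cup\{(q,q,q)_0\}$.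 There are no other edges. For a graph $G$, $d_G$ is the distance, $N^t_G[u]=\{x: d_G(u,x)\le t\}$, $N_G[u]=N^1_G[u]$. A set $U\subseteq V(G)$ is a perfect dominating set of $G$ if every vertex $x\in V(G)\setminus U$ has exactly one neighbour in $U$. *)

theory Defs
  imports Main
begin

definition ball_le :: "'v set \<Rightarrow> ('v \<Rightarrow> 'v \<Rightarrow> bool) \<Rightarrow> nat \<Rightarrow> 'v \<Rightarrow> 'v set" where
  "ball_le V E t u = {x \<in> V. \<exists>k\<le>t. (E ^^ k) u x}"

definition perfect_dominating :: "'v set \<Rightarrow> ('v \<Rightarrow> 'v \<Rightarrow> bool) \<Rightarrow> 'v set \<Rightarrow> bool" where
  "perfect_dominating V E U \<longleftrightarrow> U \<subseteq> V \<and> (\<forall>x \<in> V - U. \<exists>!y. y \<in> U \<and> E x y)"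

text \<open>Vertices of Gamma_q: (r, a, b, c) with r = True for side 1, False for side 0;
  coordinates in 'a option, None standing for the formal symbol q.\<close>

type_synonym 'a gvtx = "bool \<times> 'a option \<times> 'a option \<times> 'a option"

definition gamma_V :: "'a gvtx set" where
  "gamma_V = {(r, a, Some b, Some c) | r a b c. True} \<union> {(r, None, None, a) | r a. True}"

definition gamma_N1 :: "'a::field gvtx \<Rightarrow> 'a gvtx set" where
  "gamma_N1 v = (case v of
     (_, Some a, Some b, Some c) \<Rightarrow>
        {(False, Some x, Some (a * x + b), Some (a^2 * x + 2 * a * b + c)) | x. True}
        \<union> {(False, None, Some a, Some c)}
   | (_, None, Some b, Some c) \<Rightarrow>
        {(False, Some c, Some b, Some x) | x. True} \<union> {(False, None, None, Some c)}
   | (_, None, None, a) \<Rightarrow>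
        {(False, None, a, Some x) | x. True} \<union> {(False, None, None, None)}
   | _ \<Rightarrow> {})"

definition gamma_adj :: "'a::field gvtx \<Rightarrow> 'a gvtx \<Rightarrow> bool" where
  "gamma_adj u v \<longleftrightarrow> u \<in> gamma_V \<and> v \<in> gamma_V \<and>
     ((fst u \<and> v \<in> gamma_N1 u) \<or> (fst v \<and> u \<in> gamma_N1 v))"

end

theory Submission
  imports Defs
begin

lemma ball1: "ball_le V E 1 u = {x\<in>V. x = u \<or> E u x}"
proof -
  have h: "\<And>x. (\<exists>k\<le>1. (E ^^ k) u x) \<longleftrightarrow> x = u \<or> E u x"
  proof
    fix x assume "\<exists>k\<le>1. (E ^^ k) u x"
    then obtain k where "k\<le>1" "(E^^k) u x" by blast
    moreover have "k=0 \<or> k=1" using \<open>k\<le>1\<close> by arith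
    ultimately show "x = u \<or> E u x" by (auto simp: eq_OO)
  next
    fix x assume "x = u \<or> E u x"
    moreover have "(E ^^ 0) u u" by simp
    moreover have "E u x \<Longrightarrow> (E ^^ 1) u x" by (simp add: eq_OO)
    moreover have "(0::nat) \<le> 1" "(1::nat) \<le> 1" by auto
    ultimately show "\<exists>k\<le>1. (E ^^ k) u x" by blast
  qed
  show ?thesis unfolding ball_le_def h by (rule refl)
qed

lemma ball2: "ball_le V E 2 u = {x\<in>V. x = u \<or> E u x \<or> (\<exists>y. E u y \<and> E y x)}"
proof -
  have k: "\<And>k::nat. k \<le> 2 \<longleftrightarrow> k = 0 \<or> k = 1 \<or> k = 2" by auto
  have e: "(E ^^ 2) = E OO E" by (simp add: numeral_2_eq_2 eq_OO)
  have "\<And>x. (\<exists>k\<le>2. (E ^^ k) u x) \<longleftrightarrow> (E ^^ 0) u x \<or> (E ^^ 1) u x \<or> (E ^^ 2) u x"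
  proof
    fix x assume "\<exists>k\<le>2. (E ^^ k) u x"
    then obtain k where "k\<le>2" "(E^^k) u x" by blast
    moreover have "k=0 \<or> k=1 \<or> k=2" using \<open>k\<le>2\<close> by arith
    ultimately show "(E ^^ 0) u x \<or> (E ^^ 1) u x \<or> (E ^^ 2) u x" by blast
  next
    fix x assume "(E ^^ 0) u x \<or> (E ^^ 1) u x \<or> (E ^^ 2) u x"
    moreover have "(0::nat) \<le> 2" "(1::nat) \<le> 2" "(2::nat)\<le>2" by auto
    ultimately show "\<exists>k\<le>2. (E ^^ k) u x" by blast
  qed
  moreover have "\<And>x. (E ^^ 0) u x \<longleftrightarrow> x = u" by auto
  moreover have "\<And>x. (E ^^ 1) u x \<longleftrightarrow> E u x" by (simp add: eq_OO)
  moreover have "\<And>x. (E ^^ 2) u x \<longleftrightarrow> (\<exists>y. E u y \<and> E y x)" unfolding e by (simp add: relcompp_apply)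
  ultimately have h: "\<And>x. (\<exists>k\<le>2. (E ^^ k) u x) \<longleftrightarrow> x = u \<or> E u x \<or> (\<exists>y. E u y \<and> E y x)" by blast
  show ?thesis unfolding ball_le_def h by (rule refl)
qed

lemma V_iff[simp]: "(r,a,b,c) \<in> gamma_V \<longleftrightarrow> (b \<noteq> None \<and> c \<noteq> None) \<or> (a = None \<and> b = None)"
  unfolding gamma_V_def by (cases b; cases c; auto)

lemma N1_SSS[simp]: "gamma_N1 (r, Some a, Some b, Some c) = {(False, Some x, Some (a*x+b), Some (a^2*x+2*a*b+c)) | x. True} \<union> {(False,None,Some a,Some c)}"
  by (simp add: gamma_N1_def)
lemma N1_NSS[simp]: "gamma_N1 (r,None,Some b,Some c) = {(False,Some c,Some b,Some x)|x. True} \<union> {(False,None,None,Some c)}"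
  by (simp add: gamma_N1_def)
lemma N1_NN[simp]: "gamma_N1 (r,None,None,a) = {(False,None,a,Some x)|x. True} \<union> {(False,None,None,None)}"
  by (simp add: gamma_N1_def)
lemma N1_bad1[simp]: "gamma_N1 (r,Some a,None,c) = {}"
  by (simp add: gamma_N1_def)
lemma N1_bad2[simp]: "gamma_N1 (r,a,Some b,None) = {}"
  by (cases a) (simp_all add: gamma_N1_def)



lemma N1p1: "v \<in> gamma_N1 (r, Some a, Some b, Some c) \<Longrightarrow> fst v = False \<and> v \<in> gamma_V" by auto
lemma N1p2: "v \<in> gamma_N1 (r, None, Some b, Some c) \<Longrightarrow> fst v = False \<and> v \<in> gamma_V" by auto
lemma N1p3: "v \<in> gamma_N1 (r, None, None, c) \<Longrightarrow> fst v = False \<and> v \<in> gamma_V" by auto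

lemma N1_props: "v \<in> gamma_N1 u \<Longrightarrow> fst v = False \<and> v \<in> gamma_V"
proof -
  assume v: "v \<in> gamma_N1 u"
  obtain r a b c where u: "u = (r,a,b,c)" by (cases u) auto
  show ?thesis
  proof (cases "b = None")
    case True
    have "v \<in> gamma_N1 (r, a, None, c)" using v True unfolding u by simp
    then show ?thesis using N1p3 by (cases a) auto
  next
    case False
    then obtain b' where b: "b = Some b'" by auto
    show ?thesis
    proof (cases c)
      case None
      then show ?thesis using v unfolding u b by simp
    next
      case (Some c')
      show ?thesis
      proof (cases a)
        case None
        have "v \<in> gamma_N1 (r, None, Some b', Some c')" using v unfolding u b None Some .
        then show ?thesis by (rule N1p2)
      next
        case (Some a')
        have "v \<in> gamma_N1 (r, Some a', Some b', Some c')" using v unfolding u b Some \<open>c = Some c'\<close> .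
        then show ?thesis by (rule N1p1)
      qed
    qed
  qed
qed

lemma adj_T: "gamma_adj (True,a,b,c) v \<longleftrightarrow> (True,a,b,c) \<in> gamma_V \<and> v \<in> gamma_N1 (True,a,b,c)"
proof -
  have 1: "\<not> ((True,a,b,c) \<in> gamma_N1 v)"
  proof
    assume "(True,a,b,c) \<in> gamma_N1 v"
    from N1_props[OF this] show False by simp
  qed
  have 2: "v \<in> gamma_N1 (True,a,b,c) \<Longrightarrow> v \<in> gamma_V" using N1_props by blast
  show ?thesis unfolding gamma_adj_def fst_conv using 1 2 by blast
qed

lemma adj_F: "gamma_adj (False,a,b,c) v \<longleftrightarrow> fst v \<and> v \<in> gamma_V \<and> (False,a,b,c) \<in> gamma_N1 v"
proof -
  have "(False,a,b,c) \<in> gamma_N1 v \<Longrightarrow> (False,a,b,c) \<in> gamma_V" using N1_props by blast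
  then show ?thesis unfolding gamma_adj_def fst_conv by blast
qed

lemma ball2_T: assumes "(True,a,b,c) \<in> gamma_V"
  shows "ball_le gamma_V gamma_adj 2 (True,a,b,c) = {(True,a,b,c)} \<union> gamma_N1 (True,a,b,c)
     \<union> {x\<in>gamma_V. fst x \<and> (\<exists>y\<in>gamma_N1 (True,a,b,c). y \<in> gamma_N1 x)}"
proof -
  have 1: "gamma_adj (True,a,b,c) y \<longleftrightarrow> y \<in> gamma_N1 (True,a,b,c)" for y using assms adj_T by blast
  have 2: "y \<in> gamma_N1 (True,a,b,c) \<Longrightarrow> gamma_adj y x \<longleftrightarrow> fst x \<and> x \<in> gamma_V \<and> y \<in> gamma_N1 x" for x y
  proof -
    assume y: "y \<in> gamma_N1 (True,a,b,c)"
    then obtain p q r where yy: "y = (False,p,q,r)" using N1_props[OF y] by (cases y) auto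
    show ?thesis unfolding yy adj_F ..
  qed
  have 3: "(True,a,b,c) \<in> gamma_V" using assms .
  have 4: "y \<in> gamma_N1 (True,a,b,c) \<Longrightarrow> y \<in> gamma_V" for y using N1_props by blast
  show ?thesis unfolding ball2 using 1 2 3 4 by blast
qed

lemma ball1_T: assumes "(True,a,b,c) \<in> gamma_V"
  shows "ball_le gamma_V gamma_adj 1 (True,a,b,c) = {(True,a,b,c)} \<union> gamma_N1 (True,a,b,c)"
proof -
  have 1: "gamma_adj (True,a,b,c) y \<longleftrightarrow> y \<in> gamma_N1 (True,a,b,c)" for y using assms adj_T by blast
  have 4: "y \<in> gamma_N1 (True,a,b,c) \<Longrightarrow> y \<in> gamma_V" for y using N1_props by blast
  show ?thesis unfolding ball1 using 1 4 assms by blast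
qed

lemma ext_NN: "{x\<in>gamma_V. fst x \<and> (\<exists>y\<in>gamma_N1 (True,None,None,Some s). y \<in> gamma_N1 x)}
  = {(True,Some s,Some b,Some c)|b c. True} \<union> {(True,None,None,a)|a. True}"
proof (rule set_eqI)
  fix x :: "'a::field gvtx"
  obtain r a b c where xx: "x = (r,a,b,c)" by (cases x) auto
  show "x \<in> {x\<in>gamma_V. fst x \<and> (\<exists>y\<in>gamma_N1 (True,None,None,Some s). y \<in> gamma_N1 x)} \<longleftrightarrow>
     x \<in> {(True,Some s,Some b,Some c)|b c. True} \<union> {(True,None,None,a)|a. True}"
    unfolding xx by (cases a; cases b; cases c) auto
qed

lemma ext_NS: "{x\<in>gamma_V. fst x \<and> (\<exists>y\<in>gamma_N1 (True,None,Some 0,Some s). y \<in> gamma_N1 x)}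
  = {(True,Some a,Some b,Some z)|a b z. a*s+b = 0} \<union> {(True,None,Some b,Some s)|b. True} \<union> {(True,None,None,None)}"
proof (rule set_eqI)
  fix x :: "'a::field gvtx"
  obtain r a b c where xx: "x = (r,a,b,c)" by (cases x) auto
  show "x \<in> {x\<in>gamma_V. fst x \<and> (\<exists>y\<in>gamma_N1 (True,None,Some 0,Some s). y \<in> gamma_N1 x)} \<longleftrightarrow>
     x \<in> {(True,Some a,Some b,Some z)|a b z. a*s+b = 0} \<union> {(True,None,Some b,Some s)|b. True} \<union> {(True,None,None,None)}"
    unfolding xx by (cases a; cases b; cases c) auto
qed

lemma tup_eqI: "(\<And>r a b c. ((r,a,b,c) \<in> A) = ((r,a,b,c) \<in> B)) \<Longrightarrow> A = B"
  by (rule set_eqI) (metis prod_cases4)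

definition B0 :: "'a::field \<Rightarrow> 'a gvtx set" where
 "B0 \<xi> = {(True,None,Some 0,Some c)|c. True} \<union> {(True,Some 0,Some 0,Some z)|z. True}
   \<union> {(True,None,None,a)|a. True} \<union> {(True,Some \<xi>,Some b,Some c)|b c. True}
   \<union> {(False,Some c,Some 0,Some x)|c x. True} \<union> {(False,None,None,Some c)|c. True}
   \<union> {(False,None,None,None)} \<union> {(False,None,Some 0,Some x)|x. True} \<union> {(False,None,Some \<xi>,Some x)|x. True}"

lemma B_eq:
  fixes \<xi> :: "'a::field"
  assumes "\<xi> \<noteq> 0"
  shows "(\<Union>c. ball_le gamma_V gamma_adj 1 (True, None, Some 0, Some c))
    \<union> ball_le gamma_V gamma_adj 1 (True, None, None, Some 0)
    \<union> ((\<Inter>c. ball_le gamma_V gamma_adj 2 (True, None, Some 0, Some c))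
         \<inter> ball_le gamma_V gamma_adj 2 (True, None, None, Some 0))
    \<union> ball_le gamma_V gamma_adj 2 (True, None, None, Some \<xi>) = B0 \<xi>"
proof -
  have P1: "(\<Union>c. ball_le gamma_V gamma_adj 1 (True, None, Some 0, Some c)) =
     {(True,None,Some 0,Some c)|c. True} \<union> {(False,Some c,Some 0,Some x)|c x. True} \<union> {(False,None,None,Some (c::'a))|c. True}"
    by (subst ball1_T; auto)
  have P2: "ball_le gamma_V gamma_adj 1 (True, None, None, Some 0) =
     {(True,None,None,Some 0)} \<union> {(False,None,Some 0,Some x)|x. True} \<union> {(False,None,None,None::'a option)}"
    by (subst ball1_T; auto)
  have P4: "ball_le gamma_V gamma_adj 2 (True, None, None, Some s) =
     {(True,None,None,Some s)} \<union> {(False,None,Some s,Some x)|x. True} \<union> {(False,None,None,None)}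
     \<union> {(True,Some s,Some b,Some c)|b c. True} \<union> {(True,None,None,a)|a. True}" for s :: 'a
  proof -
    have v: "(True, None, None, Some s) \<in> gamma_V" by simp
    show ?thesis by (simp only: ball2_T[OF v] ext_NN) auto
  qed
  have P5: "ball_le gamma_V gamma_adj 2 (True, None, Some 0, Some s) =
     {(True,None,Some 0,Some s)} \<union> {(False,Some s,Some 0,Some x)|x. True} \<union> {(False,None,None,Some s)}
     \<union> ({(True,Some a,Some b,Some z)|a b z. a*s+b = 0} \<union> {(True,None,Some b,Some s)|b. True} \<union> {(True,None,None,None)})" for s :: 'a
  proof -
    have v: "(True, None, Some 0, Some s) \<in> gamma_V" by simp
    show ?thesis by (simp only: ball2_T[OF v] ext_NS) auto
  qed
  have P3: "(\<Inter>c. ball_le gamma_V gamma_adj 2 (True, None, Some 0, Some c))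
         \<inter> ball_le gamma_V gamma_adj 2 (True, None, None, Some 0) =
     {(True,Some 0,Some 0,Some z)|z. True} \<union> {(True,None,None,None::'a option)}"
  proof (rule set_eqI)
    fix x :: "'a gvtx"
    show "x \<in> (\<Inter>c. ball_le gamma_V gamma_adj 2 (True, None, Some 0, Some c))
         \<inter> ball_le gamma_V gamma_adj 2 (True, None, None, Some 0) \<longleftrightarrow>
         x \<in> {(True,Some 0,Some 0,Some z)|z. True} \<union> {(True,None,None,None::'a option)}"
    proof
      assume "x \<in> (\<Inter>c. ball_le gamma_V gamma_adj 2 (True, None, Some 0, Some c))
         \<inter> ball_le gamma_V gamma_adj 2 (True, None, None, Some 0)"
      then have "x \<in> ball_le gamma_V gamma_adj 2 (True, None, Some 0, Some 0)"
         "x \<in> ball_le gamma_V gamma_adj 2 (True, None, None, Some 0)" by blast+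
      then show "x \<in> {(True,Some 0,Some 0,Some z)|z. True} \<union> {(True,None,None,None::'a option)}"
        unfolding P4 P5 by auto
    next
      assume xa: "x \<in> {(True,Some 0,Some 0,Some z)|z. True} \<union> {(True,None,None,None::'a option)}"
      then have "x \<in> ball_le gamma_V gamma_adj 2 (True, None, Some 0, Some c)" for c
        unfolding P5 by auto
      moreover have "x \<in> ball_le gamma_V gamma_adj 2 (True, None, None, Some 0)"
        using xa unfolding P4 by auto
      ultimately show "x \<in> (\<Inter>c. ball_le gamma_V gamma_adj 2 (True, None, Some 0, Some c))
         \<inter> ball_le gamma_V gamma_adj 2 (True, None, None, Some 0)" by blast
    qed
  qed
  show ?thesis unfolding P3 unfolding P1 P2 P4 B0_def
    apply (rule tup_eqI)
    subgoal for r a b c by (cases a; cases b; cases c; cases r) auto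
    done
qed

lemma dom_F1:
  fixes \<xi> :: "'a::field"
  assumes "\<xi> \<noteq> 0" "b \<noteq> 0"
  shows "\<exists>!y. y \<in> B0 \<xi> \<and> gamma_adj (False,Some a,Some b,Some c) y"
proof (rule ex1I[of _ "(True,Some \<xi>,Some (b - \<xi>*a), Some (c - \<xi>^2*a - 2*\<xi>*(b-\<xi>*a)))"])
  show "(True,Some \<xi>,Some (b - \<xi>*a), Some (c - \<xi>^2*a - 2*\<xi>*(b-\<xi>*a))) \<in> B0 \<xi> \<and>
    gamma_adj (False,Some a,Some b,Some c) (True,Some \<xi>,Some (b - \<xi>*a), Some (c - \<xi>^2*a - 2*\<xi>*(b-\<xi>*a)))"
  proof
    show "(True,Some \<xi>,Some (b - \<xi>*a), Some (c - \<xi>^2*a - 2*\<xi>*(b-\<xi>*a))) \<in> B0 \<xi>"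
      unfolding B0_def by blast
    have m: "(False,Some a,Some (\<xi>*a+(b - \<xi>*a)),Some (\<xi>^2*a+2*\<xi>*(b - \<xi>*a)+(c - \<xi>^2*a - 2*\<xi>*(b-\<xi>*a))))
       \<in> gamma_N1 (True,Some \<xi>,Some (b - \<xi>*a), Some (c - \<xi>^2*a - 2*\<xi>*(b-\<xi>*a)))"
      by (simp only: N1_SSS) blast
    have e: "\<xi>*a+(b - \<xi>*a) = b" "\<xi>^2*a+2*\<xi>*(b - \<xi>*a)+(c - \<xi>^2*a - 2*\<xi>*(b-\<xi>*a)) = c" by simp_all
    show "gamma_adj (False,Some a,Some b,Some c) (True,Some \<xi>,Some (b - \<xi>*a), Some (c - \<xi>^2*a - 2*\<xi>*(b-\<xi>*a)))"
      unfolding adj_F using m unfolding e by simp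
  qed
next
  fix y assume y: "y \<in> B0 \<xi> \<and> gamma_adj (False,Some a,Some b,Some c) y"
  show "y = (True,Some \<xi>,Some (b - \<xi>*a), Some (c - \<xi>^2*a - 2*\<xi>*(b-\<xi>*a)))"
    using y assms unfolding adj_F B0_def by auto
qed

lemma dom_F2:
  fixes \<xi> :: "'a::field"
  assumes "b \<noteq> \<xi>" "b \<noteq> 0"
  shows "\<exists>!y. y \<in> B0 \<xi> \<and> gamma_adj (False,None,Some b,Some c) y"
proof (rule ex1I[of _ "(True,None,None,Some b)"])
  show "(True,None,None,Some b) \<in> B0 \<xi> \<and> gamma_adj (False,None,Some b,Some c) (True,None,None,Some b)"
    unfolding adj_F B0_def by simp
next
  fix y assume y: "y \<in> B0 \<xi> \<and> gamma_adj (False,None,Some b,Some c) y"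
  show "y = (True,None,None,Some b)"
    using y assms unfolding adj_F B0_def by auto
qed

lemma dom_T1:
  fixes \<xi> :: "'a::field"
  assumes "a \<noteq> \<xi>" "a \<noteq> 0"
  shows "\<exists>!y. y \<in> B0 \<xi> \<and> gamma_adj (True,Some a,Some b,Some c) y"
proof (rule ex1I[of _ "(False,Some (-b/a),Some 0,Some (a^2*(-b/a)+2*a*b+c))"])
  show "(False,Some (-b/a),Some 0,Some (a^2*(-b/a)+2*a*b+c)) \<in> B0 \<xi> \<and>
     gamma_adj (True,Some a,Some b,Some c) (False,Some (-b/a),Some 0,Some (a^2*(-b/a)+2*a*b+c))"
    unfolding adj_T B0_def using assms by auto
next
  fix y assume y: "y \<in> B0 \<xi> \<and> gamma_adj (True,Some a,Some b,Some c) y"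
  show "y = (False,Some (-b/a),Some 0,Some (a^2*(-b/a)+2*a*b+c))"
  proof -
    obtain t where t: "y = (False,Some t,Some(a*t+b),Some(a^2*t+2*a*b+c))" "a*t+b = 0"
      using y assms unfolding adj_T B0_def by auto
    have "t = -b/a" using t(2) assms(2) by (simp add: field_simps eq_neg_iff_add_eq_0 add.commute)
    then show ?thesis using t(1) t(2) by simp
  qed
qed

lemma dom_T1':
  fixes \<xi> :: "'a::field"
  assumes "\<xi> \<noteq> 0" "b \<noteq> 0"
  shows "\<exists>!y. y \<in> B0 \<xi> \<and> gamma_adj (True,Some 0,Some b,Some c) y"
proof (rule ex1I[of _ "(False,None,Some 0,Some c)"])
  show "(False,None,Some 0,Some c) \<in> B0 \<xi> \<and> gamma_adj (True,Some 0,Some b,Some c) (False,None,Some 0,Some c)"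
    unfolding adj_T B0_def by simp
next
  fix y assume y: "y \<in> B0 \<xi> \<and> gamma_adj (True,Some 0,Some b,Some c) y"
  show "y = (False,None,Some 0,Some c)"
    using y assms unfolding adj_T B0_def by auto
qed

lemma dom_T2:
  fixes \<xi> :: "'a::field"
  assumes "b \<noteq> 0"
  shows "\<exists>!y. y \<in> B0 \<xi> \<and> gamma_adj (True,None,Some b,Some c) y"
proof (rule ex1I[of _ "(False,None,None,Some c)"])
  show "(False,None,None,Some c) \<in> B0 \<xi> \<and> gamma_adj (True,None,Some b,Some c) (False,None,None,Some c)"
    unfolding adj_T B0_def by simp
next
  fix y assume y: "y \<in> B0 \<xi> \<and> gamma_adj (True,None,Some b,Some c) y"
  show "y = (False,None,None,Some c)"
    using y assms unfolding adj_T B0_def by auto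
qed

lemma B0_alt:
  fixes \<xi> :: "'a::field"
  assumes "\<xi> \<noteq> 0"
  shows "B0 \<xi> = range (\<lambda>c. (True,None,Some 0,Some c)) \<union> range (\<lambda>z. (True,Some 0,Some 0,Some z))
    \<union> range (\<lambda>a. (True,None,None,Some a)) \<union> {(True,None,None,None)}
    \<union> (\<lambda>(b,c). (True,Some \<xi>,Some b,Some c)) ` UNIV \<union> (\<lambda>(c,x). (False,Some c,Some 0,Some x)) ` UNIV
    \<union> range (\<lambda>c. (False,None,None,Some c)) \<union> {(False,None,None,None)}
    \<union> range (\<lambda>x. (False,None,Some 0,Some x)) \<union> range (\<lambda>x. (False,None,Some \<xi>,Some x))"
  unfolding B0_def
  apply (rule tup_eqI)
  subgoal for r a b c by (cases a; cases b; cases c; cases r) auto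
  done

lemma card_B0:
  fixes \<xi> :: "'a::{finite,field}"
  assumes "\<xi> \<noteq> 0"
  shows "card (B0 \<xi>) = 2 * (card (UNIV :: 'a set)^2 + 3 * card (UNIV :: 'a set) + 1)"
proof -
  have c1: "card (range f) = card (UNIV :: 'a set)" if "inj f" for f :: "'a \<Rightarrow> 'a gvtx"
    using that by (simp add: card_image)
  have c2: "card (f ` UNIV) = card (UNIV :: 'a set)^2" if "inj f" for f :: "'a\<times>'a \<Rightarrow> 'a gvtx"
    using that by (simp add: card_image card_cartesian_product power2_eq_square flip: UNIV_Times_UNIV)
  show ?thesis unfolding B0_alt[OF assms]
    using assms
    apply (subst card_Un_disjoint, simp, simp, fastforce)+
    apply (subst c1 c2, simp add: inj_def)+
    apply simp
    done
qed

lemma dom_B0: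
  fixes \<xi> :: "'a::field"
  assumes xi: "\<xi> \<noteq> 0"
  shows "perfect_dominating gamma_V gamma_adj (B0 \<xi>)"
  unfolding perfect_dominating_def
proof
  show "B0 \<xi> \<subseteq> gamma_V" unfolding B0_def by auto
  show "\<forall>x\<in>gamma_V - B0 \<xi>. \<exists>!y. y \<in> B0 \<xi> \<and> gamma_adj x y"
  proof
    fix x assume x: "x \<in> gamma_V - B0 \<xi>"
    obtain r a b c where xx: "x = (r,a,b,c)" by (cases x) auto
    have nNN: "\<not> (a = None \<and> b = None)" using x unfolding xx B0_def by (cases r) auto
    then obtain b' c' where bc: "b = Some b'" "c = Some c'" using x unfolding xx by auto
    show "\<exists>!y. y \<in> B0 \<xi> \<and> gamma_adj x y"
    proof (cases r)
      case True
      show ?thesis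
      proof (cases a)
        case None
        have "b' \<noteq> 0" using x unfolding xx None bc True B0_def by auto
        then show ?thesis unfolding xx None bc \<open>r\<close>[THEN eqTrueI] by (rule dom_T2)
      next
        case (Some a')
        have "a' \<noteq> \<xi>" using x unfolding xx Some bc \<open>r\<close>[THEN eqTrueI] B0_def by auto
        show ?thesis
        proof (cases "a' = 0")
          case True
          have "b' \<noteq> 0" using x unfolding xx Some bc \<open>r\<close>[THEN eqTrueI] True B0_def by auto
          then show ?thesis unfolding xx Some bc \<open>r\<close>[THEN eqTrueI] True using dom_T1' xi by blast
        next
          case False
          then show ?thesis unfolding xx Some bc \<open>r\<close>[THEN eqTrueI] using dom_T1 \<open>a' \<noteq> \<xi>\<close> by blast
        qed
      qed
    next
      case False
      show ?thesis
      proof (cases a)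
        case None
        have "b' \<noteq> 0" "b' \<noteq> \<xi>" using x unfolding xx None bc \<open>\<not> r\<close>[THEN Eq_FalseI] B0_def by auto
        then show ?thesis unfolding xx None bc \<open>\<not> r\<close>[THEN Eq_FalseI] using dom_F2 by blast
      next
        case (Some a')
        have "b' \<noteq> 0" using x unfolding xx Some bc \<open>\<not> r\<close>[THEN Eq_FalseI] B0_def by auto
        then show ?thesis unfolding xx Some bc \<open>\<not> r\<close>[THEN Eq_FalseI] using dom_F1 xi by blast
      qed
    qed
  qed
qed

theorem theorem2:
  fixes \<xi> :: "'a::{finite, field}"
  assumes "\<xi> \<noteq> 0"
  defines "B \<equiv>
      (\<Union>c. ball_le gamma_V gamma_adj 1 (True, None, Some 0, Some c))
    \<union> ball_le gamma_V gamma_adj 1 (True, None, None, Some 0)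
    \<union> ((\<Inter>c. ball_le gamma_V gamma_adj 2 (True, None, Some 0, Some c))
         \<inter> ball_le gamma_V gamma_adj 2 (True, None, None, Some 0))
    \<union> ball_le gamma_V gamma_adj 2 (True, None, None, Some \<xi>)"
  shows "perfect_dominating gamma_V gamma_adj B
         \<and> card B = 2 * (card (UNIV :: 'a set)^2 + 3 * card (UNIV :: 'a set) + 1)"
proof -
  have "B = B0 \<xi>" unfolding B_def by (rule B_eq[OF assms(1)])
  then show ?thesis using dom_B0[OF assms(1)] card_B0[OF assms(1)] by simp
qed
end
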